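(* Let $I\subseteq\mathbb{R}$ be an interval, let $f:I\to\mathbb{R}$ be differentiable on the interior $I^{\circ}$, let $a,b\in I^{\circ}$ with $a<b$, assume $f'\in L[a,b]$, and let $\alpha,\lambda\in[0,1]$. Suppose that $|f'|^{q}$ is $s$-convex on $[a,b]$ for some fixed $s\in(0,1]$ and some $q>1$, and let $p$ satisfy $\frac1p+\frac1q=1$. Define $$I_f(\lambda,\alpha,a,b)=\lambda\big(\alpha f(a)+(1-\alpha)f(b)\big)+(1-\lambda)f(\alpha a+(1-\alpha)b)-\frac{1}{b-a}\int_a^b f(x)\,dx,$$ $$C_f(\alpha,q)=(1-\alpha)\big[|f'((1-\alpha)b+\alpha a)|^q+|f'(a)|^q\big],\qquad D_f(\alpha,q)=\alpha\big[|f'((1-\alpha)b+\alpha a)|^q+|f'(b)|^q\big],$$ $$\varepsilon_1(\alpha,\lambda,p)=(\alpha\lambda)^{p+1}+(1-\alpha-\alpha\lambda)^{p+1},\qquad \varepsilon_2(\alpha,\lambda,p)=(\alpha\lambda)^{p+1}-(\alpha\lambda-1+\alpha)^{p+1}.$$ Then $|I_f(\lambda,\alpha,a,b)|\leq (b-a)\left(\frac{1}{p+1}\right)^{1/p}\left(\frac{1}{s+1}\right)^{1/q}\cdot K$, where $K=\varepsilon_1^{1/p}(\alpha,\lambda,p)C_f^{1/q}(\alpha,q)+\varepsilon_1^{1/p}(1-\alpha,\lambda,p)D_f^{1/q}(\alpha,q)$ if $\alpha\lambda\leq 1-\alpha\leq 1-\lambda(1-\alpha)$; $K=\varepsilon_1^{1/p}(\alpha,\lambda,p)C_f^{1/q}(\alpha,q)+\varepsilon_2^{1/p}(1-\alpha,\lambda,p)D_f^{1/q}(\alpha,q)$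 if $\alpha\lambda\leq 1-\lambda(1-\alpha)\leq 1-\alpha$; $K=\varepsilon_2^{1/p}(\alpha,\lambda,p)C_f^{1/q}(\alpha,q)+\varepsilon_1^{1/p}(1-\alpha,\lambda,p)D_f^{1/q}(\alpha,q)$ if $1-\alpha\leq\alpha\lambda\leq 1-\lambda(1-\alpha)$.
   Context: For a fixed $s\in(0,1]$, a function $g:[a,b]\to[0,\infty)$ is called $s$-convex (in the second sense) on $[a,b]$ if $g(\theta x+(1-\theta)y)\leq \theta^{s}g(x)+(1-\theta)^{s}g(y)$ for all $x,y\in[a,b]$ and all $\theta\in[0,1]$. *)

theory Defs
  imports "HOL-Analysis.Analysis"
begin

text \<open>s-convexity in the second sense on [a,b] (nonnegative function).\<close>
definition s_convex_on :: "real \<Rightarrow> (real \<Rightarrow> real) \<Rightarrow> real \<Rightarrow> real \<Rightarrow> bool" where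
  "s_convex_on s g a b \<longleftrightarrow>
     (\<forall>x\<in>{a..b}. 0 \<le> g x) \<and>
     (\<forall>x\<in>{a..b}. \<forall>y\<in>{a..b}. \<forall>\<theta>\<in>{0..1}.
        g (\<theta> * x + (1 - \<theta>) * y) \<le> \<theta> powr s * g x + (1 - \<theta>) powr s * g y)"

definition I_f :: "(real \<Rightarrow> real) \<Rightarrow> real \<Rightarrow> real \<Rightarrow> real \<Rightarrow> real \<Rightarrow> real" where
  "I_f f lam \<alpha> a b =
     lam * (\<alpha> * f a + (1 - \<alpha>) * f b) + (1 - lam) * f (\<alpha> * a + (1 - \<alpha>) * b)
     - (1 / (b - a)) * integral {a..b} f"

definition C_f :: "(real \<Rightarrow> real) \<Rightarrow> real \<Rightarrow> real \<Rightarrow> real \<Rightarrow> real \<Rightarrow> real" where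
  "C_f f' a b \<alpha> q = (1 - \<alpha>) * (\<bar>f' ((1 - \<alpha>) * b + \<alpha> * a)\<bar> powr q + \<bar>f' a\<bar> powr q)"

definition D_f :: "(real \<Rightarrow> real) \<Rightarrow> real \<Rightarrow> real \<Rightarrow> real \<Rightarrow> real \<Rightarrow> real" where
  "D_f f' a b \<alpha> q = \<alpha> * (\<bar>f' ((1 - \<alpha>) * b + \<alpha> * a)\<bar> powr q + \<bar>f' b\<bar> powr q)"

definition eps1 :: "real \<Rightarrow> real \<Rightarrow> real \<Rightarrow> real" where
  "eps1 \<alpha> lam p = (\<alpha> * lam) powr (p + 1) + (1 - \<alpha> - \<alpha> * lam) powr (p + 1)"

definition eps2 :: "real \<Rightarrow> real \<Rightarrow> real \<Rightarrow> real" where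
  "eps2 \<alpha> lam p = (\<alpha> * lam) powr (p + 1) - (\<alpha> * lam - 1 + \<alpha>) powr (p + 1)"

end

theory Submission
  imports Defs
begin

lemma powint_right:
  fixes m u v e :: real
  assumes "m \<le> u" "u \<le> v" "0 < e"
  shows "((\<lambda>x. (x-m) powr e) has_integral ((v-m) powr (e+1) - (u-m) powr (e+1))/(e+1)) {u..v}"
proof -
  have "((\<lambda>x. (x-m) powr e) has_integral ((\<lambda>x. (x-m) powr (e+1)/(e+1)) v - (\<lambda>x. (x-m) powr (e+1)/(e+1)) u)) {u..v}"
  proof (rule fundamental_theorem_of_calculus_interior[OF assms(2)])
    show "continuous_on {u..v} (\<lambda>x. (x-m) powr (e+1)/(e+1))"
      using assms by (intro continuous_intros continuous_on_powr') auto
  next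
    fix x assume x: "x \<in> {u<..<v}"
    then have "x - m > 0" using assms by auto
    have "((\<lambda>x. (x-m) powr (e+1)/(e+1)) has_real_derivative ((e+1) * (x-m) powr (e+1 - 1) * 1)/(e+1)) (at x)"
      by (intro DERIV_cdivide DERIV_fun_powr[simplified] \<open>x-m>0\<close> derivative_eq_intros) auto
    then show "((\<lambda>x. (x-m) powr (e+1)/(e+1)) has_vector_derivative (x-m) powr e) (at x)"
      using assms by (simp add: has_real_derivative_iff_has_vector_derivative[symmetric])
  qed
  then show ?thesis by (simp add: diff_divide_distrib)
qed

lemma powint_left:
  fixes m u v e :: real
  assumes "v \<le> m" "u \<le> v" "0 < e"
  shows "((\<lambda>x. (m-x) powr e) has_integral ((m-u) powr (e+1) - (m-v) powr (e+1))/(e+1)) {u..v}"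
proof -
  have "((\<lambda>x. (m-x) powr e) has_integral ((\<lambda>x. -((m-x) powr (e+1)/(e+1))) v - (\<lambda>x. -((m-x) powr (e+1)/(e+1))) u)) {u..v}"
  proof (rule fundamental_theorem_of_calculus_interior[OF assms(2)])
    show "continuous_on {u..v} (\<lambda>x. -((m-x) powr (e+1)/(e+1)))"
      using assms by (intro continuous_intros continuous_on_powr') auto
  next
    fix x assume x: "x \<in> {u<..<v}"
    then have "m - x > 0" using assms by auto
    have "((\<lambda>x. -((m-x) powr (e+1)/(e+1))) has_real_derivative -(((e+1) * (m-x) powr (e+1 - 1) * (-1))/(e+1))) (at x)"
      by (intro DERIV_minus DERIV_cdivide DERIV_fun_powr[simplified] \<open>m-x>0\<close> derivative_eq_intros) auto
    then show "((\<lambda>x. -((m-x) powr (e+1)/(e+1))) has_vector_derivative (m-x) powr e) (at x)"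
      using assms by (simp add: has_real_derivative_iff_has_vector_derivative[symmetric])
  qed
  then show ?thesis by (simp add: diff_divide_distrib)
qed


lemma ker_mid:
  fixes m u v p :: real
  assumes "u \<le> m" "m \<le> v" "0 < p"
  shows "((\<lambda>x. \<bar>x-m\<bar> powr p) has_integral ((m-u) powr (p+1) + (v-m) powr (p+1))/(p+1)) {u..v}"
proof -
  have 1: "((\<lambda>x. \<bar>x-m\<bar> powr p) has_integral ((m-u) powr (p+1) - (m-m) powr (p+1))/(p+1)) {u..m}"
    by (rule has_integral_cong[THEN iffD1, OF _ powint_left[of m m u p]]) (use assms in auto)
  have 2: "((\<lambda>x. \<bar>x-m\<bar> powr p) has_integral ((v-m) powr (p+1) - (m-m) powr (p+1))/(p+1)) {m..v}"
    by (rule has_integral_cong[THEN iffD1, OF _ powint_right[of m m v p]]) (use assms in auto)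
  show ?thesis using has_integral_combine[OF assms(1,2) 1 2] by (simp add: add_divide_distrib)
qed

lemma ker_left:
  fixes m u v p :: real
  assumes "u \<le> v" "v \<le> m" "0 < p"
  shows "((\<lambda>x. \<bar>x-m\<bar> powr p) has_integral ((m-u) powr (p+1) - (m-v) powr (p+1))/(p+1)) {u..v}"
  by (rule has_integral_cong[THEN iffD1, OF _ powint_left[of v m u p]]) (use assms in auto)

lemma ker_right:
  fixes m u v p :: real
  assumes "u \<le> v" "m \<le> u" "0 < p"
  shows "((\<lambda>x. \<bar>x-m\<bar> powr p) has_integral ((v-m) powr (p+1) - (u-m) powr (p+1))/(p+1)) {u..v}"
  by (rule has_integral_cong[THEN iffD1, OF _ powint_right[of m u v p]]) (use assms in auto)

lemma sconv_int:
  fixes G :: "real \<Rightarrow> real"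
  assumes sc: "s_convex_on s G a b" and "a \<le> u" "u \<le> v" "v \<le> b" "0 < s"
    and Gi: "G integrable_on {u..v}"
  shows "integral {u..v} G \<le> (v-u)*(G u + G v)/(s+1)"
proof (cases "u = v")
  case True then show ?thesis by simp
next
  case False
  define d where "d = v - u"
  have d: "d > 0" using False assms d_def by auto
  have i1: "((\<lambda>x. (x-u) powr s) has_integral (d powr (s+1))/(s+1)) {u..v}"
    using powint_right[of u u v s] assms by (simp add: d_def)
  have i2: "((\<lambda>x. (v-x) powr s) has_integral (d powr (s+1))/(s+1)) {u..v}"
    using powint_left[of v v u s] assms by (simp add: d_def)
  have iR: "((\<lambda>x. (x-u) powr s / d powr s * G v + (v-x) powr s / d powr s * G u) has_integral
      ((d powr (s+1))/(s+1) / d powr s * G v + (d powr (s+1))/(s+1) / d powr s * G u)) {u..v}"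
    by (intro has_integral_add has_integral_mult_left has_integral_divide i1 i2)
  have e: "(d powr (s+1))/(s+1) / d powr s = d/(s+1)"
    using d by (simp add: powr_add)
  have le: "G x \<le> (x-u) powr s / d powr s * G v + (v-x) powr s / d powr s * G u" if x: "x \<in> {u..v}" for x
  proof -
    define t where "t = (x-u)/d"
    have t: "t \<in> {0..1}" using x d by (auto simp: t_def d_def field_simps)
    have td: "t*d = x-u" using d by (simp add: t_def)
    have "t * v + (1-t) * u = u + t * d" by (simp add: d_def algebra_simps)
    then have xe: "x = t * v + (1-t) * u" using td by simp
    have "1 - t = (v-x)/d" using d by (simp add: t_def d_def field_simps)
    have "G (t * v + (1-t) * u) \<le> t powr s * G v + (1-t) powr s * G u"
      using sc t assms unfolding s_convex_on_def by auto
    also have "t powr s = (x-u) powr s / d powr s" using x d by (simp add: t_def powr_divide)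
    also have "(1-t) powr s = (v-x) powr s / d powr s" using x d \<open>1 - t = (v-x)/d\<close> by (simp add: powr_divide)
    finally show ?thesis using xe by simp
  qed
  have "integral {u..v} G \<le> (d powr (s+1))/(s+1) / d powr s * G v + (d powr (s+1))/(s+1) / d powr s * G u"
    by (rule has_integral_le[OF integrable_integral[OF Gi] iR]) (use le in auto)
  then have "integral {u..v} G \<le> d/(s+1) * G v + d/(s+1) * G u" unfolding e .
  moreover have "d/(s+1) * G v + d/(s+1) * G u = (v-u)*(G u + G v)/(s+1)"
  proof -
    have "d/(s+1) * G v + d/(s+1) * G u = d/(s+1) * (G u + G v)" by (simp only: distrib_left add.commute)
    then show ?thesis by (simp add: d_def)
  qed
  ultimately show ?thesis by simp
qed


lemma young_scaled:
  fixes x y X Y p q :: real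
  assumes "p>1" "q>1" "1/p+1/q=1" "x \<ge> 0" "y \<ge> 0" "X > 0" "Y > 0"
  shows "x * y \<le> (x powr p / (p*X) + y powr q / (q*Y)) * (X powr (1/p) * Y powr (1/q))"
proof -
  define Xp Yq where "Xp = X powr (1/p)" and "Yq = Y powr (1/q)"
  have pos: "Xp > 0" "Yq > 0" using assms by (auto simp: Xp_def Yq_def)
  have "(x/Xp) * (y/Yq) \<le> (x/Xp) powr p / p + (y/Yq) powr q / q"
    by (rule Youngs_inequality) (use assms pos in auto)
  also have "(x/Xp) powr p = x powr p / X"
    using assms pos by (simp add: powr_divide Xp_def powr_powr)
  also have "(y/Yq) powr q = y powr q / Y"
    using assms pos by (simp add: powr_divide Yq_def powr_powr)
  finally have "(x/Xp) * (y/Yq) \<le> x powr p / X / p + y powr q / Y / q" .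
  then have "(x/Xp) * (y/Yq) * (Xp*Yq) \<le> (x powr p / X / p + y powr q / Y / q) * (Xp*Yq)"
    using pos by (intro mult_right_mono) auto
  then show ?thesis using pos by (simp add: Xp_def Yq_def field_simps)
qed

lemma holder_gen:
  fixes g h :: "real \<Rightarrow> real" and S :: "real set"
  assumes "p>1" "q>1" "1/p+1/q=1"
    and nn: "\<And>x. x \<in> S \<Longrightarrow> g x \<ge> 0" "\<And>x. x \<in> S \<Longrightarrow> h x \<ge> 0"
    and ig: "(\<lambda>x. g x powr p) integrable_on S" and ih: "(\<lambda>x. h x powr q) integrable_on S"
    and igh: "(\<lambda>x. g x * h x) integrable_on S"
    and X: "X > 0" "integral S (\<lambda>x. g x powr p) \<le> X"
    and Y: "Y > 0" "integral S (\<lambda>x. h x powr q) \<le> Y"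
  shows "integral S (\<lambda>x. g x * h x) \<le> X powr (1/p) * Y powr (1/q)"
proof -
  define K where "K = X powr (1/p) * Y powr (1/q)"
  have K: "K > 0" using X Y by (simp add: K_def)
  have hi: "((\<lambda>x. (g x powr p / (p*X) + h x powr q / (q*Y)) * K) has_integral
      ((integral S (\<lambda>x. g x powr p) / (p*X) + integral S (\<lambda>x. h x powr q) / (q*Y)) * K)) S"
    by (intro has_integral_mult_left has_integral_add has_integral_divide integrable_integral ig ih)
  have "integral S (\<lambda>x. g x * h x) \<le> (integral S (\<lambda>x. g x powr p) / (p*X) + integral S (\<lambda>x. h x powr q) / (q*Y)) * K"
    by (rule has_integral_le[OF integrable_integral[OF igh] hi])
       (use X Y in \<open>auto simp: K_def young_scaled assms nn\<close>)
  also have "\<dots> \<le> (X / (p*X) + Y / (q*Y)) * K"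
    using X Y K assms by (intro mult_right_mono add_mono divide_right_mono) auto
  also have "\<dots> = K" using X Y assms by simp
  finally show ?thesis by (simp add: K_def)
qed


lemma holder:
  fixes g h :: "real \<Rightarrow> real" and S :: "real set"
  assumes pq: "p>1" "q>1" "1/p+1/q=1"
    and nn: "\<And>x. x \<in> S \<Longrightarrow> g x \<ge> 0" "\<And>x. x \<in> S \<Longrightarrow> h x \<ge> 0"
    and ig: "(\<lambda>x. g x powr p) integrable_on S" and ih: "(\<lambda>x. h x powr q) integrable_on S"
    and igh: "(\<lambda>x. g x * h x) integrable_on S"
  shows "integral S (\<lambda>x. g x * h x) \<le>
     (integral S (\<lambda>x. g x powr p)) powr (1/p) * (integral S (\<lambda>x. h x powr q)) powr (1/q)"
proof -
  define A B P where "A = integral S (\<lambda>x. g x powr p)" and "B = integral S (\<lambda>x. h x powr q)"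
    and "P = integral S (\<lambda>x. g x * h x)"
  have A: "A \<ge> 0" unfolding A_def by (rule integral_nonneg[OF ig]) auto
  have B: "B \<ge> 0" unfolding B_def by (rule integral_nonneg[OF ih]) auto
  have gen: "P \<le> X powr (1/p) * Y powr (1/q)" if "X > 0" "A \<le> X" "Y > 0" "B \<le> Y" for X Y
    unfolding P_def by (rule holder_gen[OF pq nn ig ih igh]) (use that in \<open>auto simp: A_def B_def\<close>)
  show ?thesis
  proof (cases "A > 0 \<and> B > 0")
    case True
    then show ?thesis using gen[of A B] by (simp add: A_def B_def P_def)
  next
    case False
    then have z: "A = 0 \<or> B = 0" using A B by auto
    then have rhs: "A powr (1/p) * B powr (1/q) = 0" by auto
    have "P \<le> 0"
    proof (rule ccontr)
      assume "\<not> P \<le> 0" then have P0: "P > 0" by simp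
      show False
      proof (cases "A = 0")
        case True
        define K where "K = (B+1) powr (1/q)"
        have K: "K > 0" using B by (simp add: K_def)
        define t where "t = (P/(2*K)) powr p"
        have t: "t > 0" using P0 K by (simp add: t_def)
        have "t powr (1/p) = P/(2*K)" using P0 K pq by (simp add: t_def powr_powr)
        then have "P \<le> P/(2*K) * K" using gen[of t "B+1"] t True B by (simp add: K_def)
        also have "\<dots> = P/2" using K by simp
        finally show False using P0 by simp
      next
        case False
        then have B0: "B = 0" using z by simp
        define K where "K = (A+1) powr (1/p)"
        have K: "K > 0" using A by (simp add: K_def)
        define t where "t = (P/(2*K)) powr q"
        have t: "t > 0" using P0 K by (simp add: t_def)
        have "t powr (1/q) = P/(2*K)" using P0 K pq by (simp add: t_def powr_powr)
        then have "P \<le> K * (P/(2*K))" using gen[of "A+1" t] t B0 A by (simp add: K_def)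
        also have "\<dots> = P/2" using K by simp
        finally show False using P0 by simp
      qed
    qed
    then show ?thesis using rhs by (simp only: A_def B_def P_def)
  qed
qed


lemma piece:
  fixes f f' :: "real \<Rightarrow> real"
  assumes deriv: "\<And>x. x \<in> {a..b} \<Longrightarrow> (f has_real_derivative f' x) (at x)"
    and sc: "s_convex_on s (\<lambda>x. \<bar>f' x\<bar> powr q) a b"
    and uv: "a \<le> u" "u \<le> v" "v \<le> b"
    and pars: "0 < s" "1 < q" "1 < p" "1/p+1/q = 1"
    and K: "((\<lambda>x. \<bar>x-m\<bar> powr p) has_integral K) {u..v}"
  shows "((\<lambda>x. (x-m)*f' x) has_integral ((v-m)*f v - (u-m)*f u - integral {u..v} f)) {u..v}"
    and "\<bar>integral {u..v} (\<lambda>x. (x-m)*f' x)\<bar> \<le>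
         K powr (1/p) * ((v-u)*(\<bar>f' u\<bar> powr q + \<bar>f' v\<bar> powr q)/(s+1)) powr (1/q)"
proof -
  define G where "G = (\<lambda>x. \<bar>f' x\<bar> powr q)"
  have sub: "{u..v} \<subseteq> {a..b}" using uv by auto
  have d: "\<And>x. x \<in> {u..v} \<Longrightarrow> (f has_real_derivative f' x) (at x)" using deriv sub by auto
  have contf: "continuous_on {u..v} f"
    by (intro continuous_at_imp_continuous_on ballI DERIV_isCont[OF d]) auto
  have fi: "f integrable_on {u..v}" by (rule integrable_continuous_interval[OF contf])
  have hd: "((\<lambda>x. (x-m) * f x) has_vector_derivative (f x + (x-m) * f' x)) (at x within {u..v})"
    if "x \<in> {u..v}" for x
  proof -
    have "((\<lambda>x. (x-m) * f x) has_real_derivative (1 * f x + (x-m) * f' x)) (at x)"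
      using d[OF that] by (auto intro!: derivative_eq_intros)
    then show ?thesis
      by (simp add: has_real_derivative_iff_has_vector_derivative[symmetric] has_field_derivative_at_within)
  qed
  have ftc: "((\<lambda>x. f x + (x-m) * f' x) has_integral ((v-m)*f v - (u-m)*f u)) {u..v}"
    using fundamental_theorem_of_calculus[OF uv(2) hd] by simp
  have eq: "((\<lambda>x. (f x + (x-m) * f' x) - f x) has_integral ((v-m)*f v - (u-m)*f u - integral {u..v} f)) {u..v}"
    by (intro has_integral_diff ftc integrable_integral fi)
  show I1: "((\<lambda>x. (x-m)*f' x) has_integral ((v-m)*f v - (u-m)*f u - integral {u..v} f)) {u..v}"
    using eq by simp
  define M where "M = G a + G b"
  have Gnn: "\<And>x. G x \<ge> 0" by (simp add: G_def)
  have Gb: "G x \<le> M" if x: "x \<in> {a..b}" for x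
  proof (cases "a = b")
    case True then show ?thesis using x Gnn by (simp add: M_def)
  next
    case False
    then have ab: "a < b" using x by auto
    define t where "t = (x-a)/(b-a)"
    have t: "t \<in> {0..1}" using x ab by (auto simp: t_def field_simps)
    have "t * (b-a) = x - a" using ab by (simp add: t_def)
    then have xe: "x = t * b + (1-t) * a" by (simp add: algebra_simps)
    have "G (t * b + (1-t) * a) \<le> t powr s * G b + (1-t) powr s * G a"
      using sc t ab unfolding s_convex_on_def G_def by auto
    also have "\<dots> \<le> 1 * G b + 1 * G a"
      using t pars Gnn by (intro add_mono mult_right_mono powr_le1) auto
    finally show ?thesis using xe by (simp add: M_def)
  qed
  have M0: "M \<ge> 0" using Gnn by (simp add: M_def)
  define M' where "M' = M powr (1/q)"
  have fb: "\<bar>f' x\<bar> \<le> M'" if "x \<in> {u..v}" for x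
  proof -
    have "\<bar>f' x\<bar> = (G x) powr (1/q)" using pars by (simp add: G_def powr_powr)
    also have "\<dots> \<le> M'" unfolding M'_def using Gb[of x] that sub Gnn pars
      by (intro powr_mono2) auto
    finally show ?thesis .
  qed
  have f'i: "f' integrable_on {u..v}"
    using fundamental_theorem_of_calculus[OF uv(2), of f f'] d
    by (auto simp: has_real_derivative_iff_has_vector_derivative[symmetric] has_field_derivative_at_within)
  have Gi: "G integrable_on {u..v}"
  proof -
    have "f' \<in> borel_measurable (lebesgue_on {u..v})" by (rule integrable_imp_measurable[OF f'i])
    then have "G \<in> borel_measurable (lebesgue_on {u..v})" unfolding G_def by measurable
    then have "G absolutely_integrable_on {u..v}"
      by (rule measurable_bounded_by_integrable_imp_absolutely_integrable[where g = "\<lambda>_. M"])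
         (use Gb sub Gnn in auto)
    then show ?thesis by (simp add: absolutely_integrable_on_def)
  qed
  define C where "C = (\<bar>u\<bar> + \<bar>v\<bar> + \<bar>m\<bar>) * M'"
  have prodi: "(\<lambda>x. (x-m) * f' x) absolutely_integrable_on {u..v}"
  proof (rule absolutely_integrable_integrable_bound[where g = "\<lambda>_. C"])
    fix x assume x: "x \<in> {u..v}"
    have "\<bar>x - m\<bar> \<le> \<bar>u\<bar> + \<bar>v\<bar> + \<bar>m\<bar>" using x by auto
    then show "norm ((x-m) * f' x) \<le> C" unfolding C_def
      using fb[OF x] by (simp add: abs_mult mult_mono)
  qed (use I1 in auto)
  have absi: "(\<lambda>x. \<bar>x-m\<bar> * \<bar>f' x\<bar>) integrable_on {u..v}"
    using prodi by (simp add: absolutely_integrable_on_def abs_mult)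
  have "\<bar>integral {u..v} (\<lambda>x. (x-m)*f' x)\<bar> \<le> integral {u..v} (\<lambda>x. \<bar>x-m\<bar> * \<bar>f' x\<bar>)"
    using integral_norm_bound_integral[OF has_integral_integrable[OF I1] absi] by (simp add: abs_mult)
  also have "\<dots> \<le> (integral {u..v} (\<lambda>x. \<bar>x-m\<bar> powr p)) powr (1/p) *
                   (integral {u..v} (\<lambda>x. \<bar>f' x\<bar> powr q)) powr (1/q)"
    by (rule holder[OF pars(3,2,4)]) (use K Gi absi in \<open>auto simp: G_def\<close>)
  also have "\<dots> \<le> K powr (1/p) * ((v-u)*(G u + G v)/(s+1)) powr (1/q)"
  proof -
    have "integral {u..v} G \<le> (v-u)*(G u + G v)/(s+1)"
      by (rule sconv_int[OF _ uv pars(1) Gi]) (use sc in \<open>simp add: G_def\<close>)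
    moreover have "integral {u..v} G \<ge> 0" by (rule integral_nonneg[OF Gi]) (simp add: Gnn)
    ultimately have "(integral {u..v} G) powr (1/q) \<le> ((v-u)*(G u + G v)/(s+1)) powr (1/q)"
      using pars by (intro powr_mono2) auto
    then show ?thesis using K by (simp add: G_def integral_unique mult_left_mono)
  qed
  finally show "\<bar>integral {u..v} (\<lambda>x. (x-m)*f' x)\<bar> \<le>
         K powr (1/p) * ((v-u)*(\<bar>f' u\<bar> powr q + \<bar>f' v\<bar> powr q)/(s+1)) powr (1/q)"
    by (simp add: G_def)
qed


lemma alg:
  fixes B E X p q s :: real
  assumes "B > 0" "E \<ge> 0" "X \<ge> 0" "p > 0" "q > 0" "s > 0" "1/p + 1/q = 1"
  shows "(B powr (p+1) * E/(p+1)) powr (1/p) * (B*X/(s+1)) powr (1/q) / B =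
         B * (1/(p+1)) powr (1/p) * (1/(s+1)) powr (1/q) * (E powr (1/p) * X powr (1/q))"
proof -
  have "(B powr (p+1) * E/(p+1)) powr (1/p) = B powr ((p+1)/p) * E powr (1/p) * (1/(p+1)) powr (1/p)"
    using assms by (simp add: powr_mult powr_divide powr_powr)
  moreover have "(B*X/(s+1)) powr (1/q) = B powr (1/q) * X powr (1/q) * (1/(s+1)) powr (1/q)"
    using assms by (simp add: powr_mult powr_divide)
  moreover have "B powr ((p+1)/p) * B powr (1/q) = B * B"
  proof -
    have "(p+1)/p + 1/q = 2" using assms by (simp add: add_divide_distrib)
    then have "B powr ((p+1)/p) * B powr (1/q) = B powr 2" by (simp add: powr_add[symmetric])
    then show ?thesis using assms by (simp add: power2_eq_square)
  qed
  ultimately show ?thesis using assms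
    by (simp add: field_simps)
qed


lemma main_bound:
  fixes f f' :: "real \<Rightarrow> real"
  assumes deriv: "\<And>x. x \<in> {a..b} \<Longrightarrow> (f has_real_derivative f' x) (at x)"
    and sc: "s_convex_on s (\<lambda>x. \<bar>f' x\<bar> powr q) a b"
    and ab: "a < b" and al: "\<alpha> \<in> {0..1}" and la: "lam \<in> {0..1}"
    and pars: "0 < s" "1 < q" "1 < p" "1/p+1/q = 1"
    and K1: "((\<lambda>x. \<bar>x - (a + \<alpha>*lam*(b-a))\<bar> powr p) has_integral K1) {a..\<alpha>*a+(1-\<alpha>)*b}"
    and K2: "((\<lambda>x. \<bar>x - (b - lam*(1-\<alpha>)*(b-a))\<bar> powr p) has_integral K2) {\<alpha>*a+(1-\<alpha>)*b..b}"
  shows "\<bar>I_f f lam \<alpha> a b\<bar> \<le>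
    (K1 powr (1/p) * (((\<alpha>*a+(1-\<alpha>)*b) - a)*(\<bar>f' a\<bar> powr q + \<bar>f' (\<alpha>*a+(1-\<alpha>)*b)\<bar> powr q)/(s+1)) powr (1/q)
   + K2 powr (1/p) * ((b - (\<alpha>*a+(1-\<alpha>)*b))*(\<bar>f' (\<alpha>*a+(1-\<alpha>)*b)\<bar> powr q + \<bar>f' b\<bar> powr q)/(s+1)) powr (1/q))
   / (b-a)" (is "?L \<le> ?R")
proof -
  define c where "c = \<alpha>*a+(1-\<alpha>)*b"
  define m1 where "m1 = a + \<alpha>*lam*(b-a)"
  define m2 where "m2 = b - lam*(1-\<alpha>)*(b-a)"
  have "c - a = (1-\<alpha>)*(b-a)" by (simp add: c_def algebra_simps)
  moreover have "0 \<le> (1-\<alpha>)*(b-a)" using al ab by (intro mult_nonneg_nonneg) auto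
  ultimately have ac: "a \<le> c" by linarith
  have "b - c = \<alpha>*(b-a)" by (simp add: c_def algebra_simps)
  moreover have "0 \<le> \<alpha>*(b-a)" using al ab by (intro mult_nonneg_nonneg) auto
  ultimately have cb: "c \<le> b" by linarith
  note P1 = piece[OF deriv sc order.refl ac cb pars K1[folded c_def]]
  note P2 = piece[OF deriv sc ac cb order.refl pars K2[folded c_def]]
  define J1 where "J1 = integral {a..c} (\<lambda>x. (x-m1)*f' x)"
  define J2 where "J2 = integral {c..b} (\<lambda>x. (x-m2)*f' x)"
  have J1: "J1 = (c-m1)*f c - (a-m1)*f a - integral {a..c} f"
    using P1(1) unfolding J1_def m1_def by (rule integral_unique)
  have J2: "J2 = (b-m2)*f b - (c-m2)*f c - integral {c..b} f"
    using P2(1) unfolding J2_def m2_def by (rule integral_unique)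
  have contf: "continuous_on {a..b} f"
    by (intro continuous_at_imp_continuous_on ballI DERIV_isCont[OF deriv]) auto
  have fi: "f integrable_on {a..b}" by (rule integrable_continuous_interval[OF contf])
  have comb: "integral {a..c} f + integral {c..b} f = integral {a..b} f"
    by (rule Henstock_Kurzweil_Integration.integral_combine[OF ac cb fi])
  have "I_f f lam \<alpha> a b * (b-a) = J1 + J2"
  proof -
    have "I_f f lam \<alpha> a b * (b-a) = (lam * (\<alpha> * f a + (1 - \<alpha>) * f b) + (1 - lam) * f c) * (b-a)
        - integral {a..b} f"
    proof -
      have "(1/(b-a)) * integral {a..b} f * (b-a) = integral {a..b} f" using ab by simp
      then show ?thesis unfolding I_f_def c_def by (simp only: left_diff_distrib)
    qed
    also have "\<dots> = J1 + J2" unfolding J1 J2 comb[symmetric] m1_def m2_def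
      by (simp add: algebra_simps)
    finally show ?thesis .
  qed
  then have Ieq: "I_f f lam \<alpha> a b = (J1 + J2)/(b-a)" using ab by (simp add: field_simps)
  have "\<bar>I_f f lam \<alpha> a b\<bar> \<le> (\<bar>J1\<bar> + \<bar>J2\<bar>)/(b-a)"
    unfolding Ieq using ab by (simp add: abs_triangle_ineq divide_right_mono)
  also have "\<dots> \<le> ?R" using P1(2) P2(2) ab
    unfolding J1_def J2_def m1_def m2_def c_def by (intro divide_right_mono add_mono) auto
  finally show ?thesis .
qed


lemma final_alg:
  fixes B E1 E2 X1 X2 p q s :: real
  assumes "B > 0" "E1 \<ge> 0" "E2 \<ge> 0" "X1 \<ge> 0" "X2 \<ge> 0" "p > 0" "q > 0" "s > 0" "1/p + 1/q = 1"
  shows "((B powr (p+1) * E1/(p+1)) powr (1/p) * (B*X1/(s+1)) powr (1/q)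
        + (B powr (p+1) * E2/(p+1)) powr (1/p) * (B*X2/(s+1)) powr (1/q)) / B =
     B * (1/(p+1)) powr (1/p) * (1/(s+1)) powr (1/q) * (E1 powr (1/p) * X1 powr (1/q) + E2 powr (1/p) * X2 powr (1/q))"
  using alg[of B E1 X1 p q s] alg[of B E2 X2 p q s] assms
  by (simp add: add_divide_distrib distrib_left)

lemma hi_eq: "(f has_integral i) S \<Longrightarrow> i = j \<Longrightarrow> (f has_integral j) S" by simp

theorem theorem2p3:
  fixes I :: "real set" and f f' :: "real \<Rightarrow> real"
    and a b \<alpha> lam s q p :: real
  assumes "is_interval I"
    and "\<forall>x\<in>interior I. (f has_real_derivative f' x) (at x)"
    and "a \<in> interior I" and "b \<in> interior I" and "a < b"
    and "set_integrable lborel {a..b} f'"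
    and "\<alpha> \<in> {0..1}" and "lam \<in> {0..1}"
    and "0 < s" and "s \<le> 1" and "1 < q"
    and "s_convex_on s (\<lambda>x. \<bar>f' x\<bar> powr q) a b"
    and "1 / p + 1 / q = 1"
  shows
    "(\<alpha> * lam \<le> 1 - \<alpha> \<and> 1 - \<alpha> \<le> 1 - lam * (1 - \<alpha>) \<longrightarrow>
       \<bar>I_f f lam \<alpha> a b\<bar> \<le> (b - a) * (1 / (p + 1)) powr (1 / p) * (1 / (s + 1)) powr (1 / q) *
         (eps1 \<alpha> lam p powr (1 / p) * C_f f' a b \<alpha> q powr (1 / q)
          + eps1 (1 - \<alpha>) lam p powr (1 / p) * D_f f' a b \<alpha> q powr (1 / q))) \<and>
     (\<alpha> * lam \<le> 1 - lam * (1 - \<alpha>) \<and> 1 - lam * (1 - \<alpha>) \<le> 1 - \<alpha> \<longrightarrow>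
       \<bar>I_f f lam \<alpha> a b\<bar> \<le> (b - a) * (1 / (p + 1)) powr (1 / p) * (1 / (s + 1)) powr (1 / q) *
         (eps1 \<alpha> lam p powr (1 / p) * C_f f' a b \<alpha> q powr (1 / q)
          + eps2 (1 - \<alpha>) lam p powr (1 / p) * D_f f' a b \<alpha> q powr (1 / q))) \<and>
     (1 - \<alpha> \<le> \<alpha> * lam \<and> \<alpha> * lam \<le> 1 - lam * (1 - \<alpha>) \<longrightarrow>
       \<bar>I_f f lam \<alpha> a b\<bar> \<le> (b - a) * (1 / (p + 1)) powr (1 / p) * (1 / (s + 1)) powr (1 / q) *
         (eps2 \<alpha> lam p powr (1 / p) * C_f f' a b \<alpha> q powr (1 / q)
          + eps1 (1 - \<alpha>) lam p powr (1 / p) * D_f f' a b \<alpha> q powr (1 / q)))"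
proof -
  note A = assms
  have ii: "is_interval (interior I)"
    using A(1) by (simp add: is_interval_convex_1)
  have deriv: "\<And>x. x \<in> {a..b} \<Longrightarrow> (f has_real_derivative f' x) (at x)"
    using A(2) mem_is_interval_1_I[OF ii A(3) A(4)] by auto
  have q1: "0 < 1/q" "1/q < 1" using A(11) by auto
  have ip: "1/p = 1 - 1/q" using A(13) by simp
  then have "0 < 1/p" "1/p < 1" using q1 by auto
  moreover have "0 < p" using \<open>0 < 1/p\<close> by simp
  ultimately have p1: "1 < p" by (simp add: divide_less_eq)
  have pars: "0 < s" "1 < q" "1 < p" "1/p+1/q = 1" using A p1 by auto
  have al: "0 \<le> \<alpha>" "\<alpha> \<le> 1" and la: "0 \<le> lam" "lam \<le> 1" using A(7,8) by auto
  define B where "B = b - a"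
  have B: "B > 0" using A(5) by (simp add: B_def)
  define c where "c = \<alpha>*a+(1-\<alpha>)*b"
  define m1 where "m1 = a + \<alpha>*lam*(b-a)"
  define m2 where "m2 = b - lam*(1-\<alpha>)*(b-a)"
  define G where "G = (\<lambda>x. \<bar>f' x\<bar> powr q)"
  have e1: "m1 - a = B*(\<alpha>*lam)" by (simp add: m1_def B_def algebra_simps)
  have e2: "c - m1 = B*(1-\<alpha>-\<alpha>*lam)" by (simp add: m1_def c_def B_def algebra_simps)
  have e3: "m1 - c = B*(\<alpha>*lam-1+\<alpha>)" by (simp add: m1_def c_def B_def algebra_simps)
  have e4: "b - m2 = B*((1-\<alpha>)*lam)" by (simp add: m2_def B_def algebra_simps)
  have e5: "m2 - c = B*(1-(1-\<alpha>)-(1-\<alpha>)*lam)" by (simp add: m2_def c_def B_def algebra_simps)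
  have e6: "c - m2 = B*((1-\<alpha>)*lam-1+(1-\<alpha>))" by (simp add: m2_def c_def B_def algebra_simps)
  have n1: "0 \<le> \<alpha>*lam" "0 \<le> (1-\<alpha>)*lam" using al la by auto
  have ca: "c - a = B*(1-\<alpha>)" by (simp add: c_def B_def algebra_simps)
  have bc: "b - c = B*\<alpha>" by (simp add: c_def B_def algebra_simps)
  have "0 \<le> B*(1-\<alpha>)" using B al by simp
  then have ac: "a \<le> c" using ca by linarith
  have "0 \<le> B*\<alpha>" using B al by simp
  then have cb: "c \<le> b" using bc by linarith
  have "0 \<le> B*(\<alpha>*lam)" using B n1 by simp
  then have am1: "a \<le> m1" using e1 by linarith
  have "0 \<le> B*((1-\<alpha>)*lam)" using B n1 by simp
  then have m2b: "m2 \<le> b" using e4 by linarith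
  have pp: "0 < p" using p1 by simp
  have pm: "\<And>x. 0 \<le> x \<Longrightarrow> (B*x) powr (p+1) = B powr (p+1) * x powr (p+1)"
    using B by (simp add: powr_mult)
  have K1a: "((\<lambda>x. \<bar>x - m1\<bar> powr p) has_integral (B powr (p+1) * eps1 \<alpha> lam p/(p+1))) {a..c}"
    if h: "\<alpha> * lam \<le> 1 - \<alpha>"
  proof (rule hi_eq[OF ker_mid[of a m1 c p]])
    have "0 \<le> B*(1-\<alpha>-\<alpha>*lam)" using B h by simp
    then have "m1 \<le> c" using e2 by linarith
    then show "a \<le> m1" "m1 \<le> c" "0 < p" using am1 pp by auto
    have h': "0 \<le> 1-\<alpha>-\<alpha>*lam" using h by simp
    show "((m1 - a) powr (p + 1) + (c - m1) powr (p + 1)) / (p + 1) = B powr (p+1) * eps1 \<alpha> lam p/(p+1)"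
      unfolding e1 e2 eps1_def pm[OF n1(1)] pm[OF h'] by (simp add: distrib_left)
  qed
  have K1b: "((\<lambda>x. \<bar>x - m1\<bar> powr p) has_integral (B powr (p+1) * eps2 \<alpha> lam p/(p+1))) {a..c}"
    if h: "1 - \<alpha> \<le> \<alpha> * lam"
  proof (rule hi_eq[OF ker_left[of a c m1 p]])
    have "0 \<le> B*(\<alpha>*lam-1+\<alpha>)" using B h by simp
    then have "c \<le> m1" using e3 by linarith
    then show "a \<le> c" "c \<le> m1" "0 < p" using ac pp by auto
    have h': "0 \<le> \<alpha>*lam-1+\<alpha>" using h by simp
    show "((m1 - a) powr (p + 1) - (m1 - c) powr (p + 1)) / (p + 1) = B powr (p+1) * eps2 \<alpha> lam p/(p+1)"
      unfolding e1 e3 eps2_def pm[OF n1(1)] pm[OF h'] by (simp add: right_diff_distrib)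
  qed
  have K2a: "((\<lambda>x. \<bar>x - m2\<bar> powr p) has_integral (B powr (p+1) * eps1 (1-\<alpha>) lam p/(p+1))) {c..b}"
    if h: "1 - \<alpha> \<le> 1 - lam * (1 - \<alpha>)"
  proof (rule hi_eq[OF ker_mid[of c m2 b p]])
    have h': "0 \<le> 1-(1-\<alpha>)-(1-\<alpha>)*lam" using h by (simp add: algebra_simps)
    have "0 \<le> B*(1-(1-\<alpha>)-(1-\<alpha>)*lam)" using B h' by simp
    then have "c \<le> m2" using e5 by linarith
    then show "c \<le> m2" "m2 \<le> b" "0 < p" using m2b pp by auto
    show "((m2 - c) powr (p + 1) + (b - m2) powr (p + 1)) / (p + 1) = B powr (p+1) * eps1 (1-\<alpha>) lam p/(p+1)"
      unfolding e4 e5 eps1_def pm[OF n1(2)] pm[OF h'] by (simp add: distrib_left)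
  qed
  have K2b: "((\<lambda>x. \<bar>x - m2\<bar> powr p) has_integral (B powr (p+1) * eps2 (1-\<alpha>) lam p/(p+1))) {c..b}"
    if h: "1 - lam * (1 - \<alpha>) \<le> 1 - \<alpha>"
  proof (rule hi_eq[OF ker_right[of c b m2 p]])
    have h': "0 \<le> (1-\<alpha>)*lam-1+(1-\<alpha>)" using h by (simp add: algebra_simps)
    have "0 \<le> B*((1-\<alpha>)*lam-1+(1-\<alpha>))" using B h' by simp
    then have "m2 \<le> c" using e6 by linarith
    then show "c \<le> b" "m2 \<le> c" "0 < p" using cb pp by auto
    show "((b - m2) powr (p + 1) - (c - m2) powr (p + 1)) / (p + 1) = B powr (p+1) * eps2 (1-\<alpha>) lam p/(p+1)"
      unfolding e4 e6 eps2_def pm[OF n1(2)] pm[OF h'] by (simp add: right_diff_distrib)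
  qed
  have eps1nn: "0 \<le> eps1 x y p" for x y by (simp add: eps1_def)
  have eps2nn: "0 \<le> eps2 x y p" if "0 \<le> x*y - 1 + x" "x*y-1+x \<le> x*y" for x y
    unfolding eps2_def using that pp by (simp add: powr_mono2)
  have Cnn: "0 \<le> C_f f' a b \<alpha> q" using al by (simp add: C_f_def)
  have Dnn: "0 \<le> D_f f' a b \<alpha> q" using al by (simp add: D_f_def)
  have point: "(1-\<alpha>)*b + \<alpha>*a = c" by (simp add: c_def)
  have cC: "(c - a)*(G a + G c) = B * C_f f' a b \<alpha> q"
    unfolding ca C_f_def G_def point by (simp add: algebra_simps)
  have cD: "(b - c)*(G c + G b) = B * D_f f' a b \<alpha> q"
    unfolding bc D_f_def G_def point by (simp add: algebra_simps)
  have gen: "\<bar>I_f f lam \<alpha> a b\<bar> \<le> B * (1/(p+1)) powr (1/p) * (1/(s+1)) powr (1/q) *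
      (E1 powr (1/p) * C_f f' a b \<alpha> q powr (1/q) + E2 powr (1/p) * D_f f' a b \<alpha> q powr (1/q))"
    if K1: "((\<lambda>x. \<bar>x - m1\<bar> powr p) has_integral (B powr (p+1) * E1/(p+1))) {a..c}"
      and K2: "((\<lambda>x. \<bar>x - m2\<bar> powr p) has_integral (B powr (p+1) * E2/(p+1))) {c..b}"
      and E: "0 \<le> E1" "0 \<le> E2" for E1 E2
  proof -
    have "\<bar>I_f f lam \<alpha> a b\<bar> \<le> ((B powr (p+1) * E1/(p+1)) powr (1/p) * ((c-a)*(G a + G c)/(s+1)) powr (1/q)
        + (B powr (p+1) * E2/(p+1)) powr (1/p) * ((b-c)*(G c + G b)/(s+1)) powr (1/q)) / (b-a)"
      using main_bound[OF deriv A(12) A(5) A(7) A(8) pars K1[unfolded m1_def c_def] K2[unfolded m2_def c_def]]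
      unfolding G_def c_def by simp
    also have "\<dots> = B * (1/(p+1)) powr (1/p) * (1/(s+1)) powr (1/q) *
      (E1 powr (1/p) * C_f f' a b \<alpha> q powr (1/q) + E2 powr (1/p) * D_f f' a b \<alpha> q powr (1/q))"
      unfolding cC cD B_def[symmetric]
      by (rule final_alg) (use B E Cnn Dnn pars in auto)
    finally show ?thesis .
  qed
  show ?thesis
  proof (intro conjI impI)
    assume h: "\<alpha> * lam \<le> 1 - \<alpha> \<and> 1 - \<alpha> \<le> 1 - lam * (1 - \<alpha>)"
    show "\<bar>I_f f lam \<alpha> a b\<bar> \<le> (b - a) * (1 / (p + 1)) powr (1 / p) * (1 / (s + 1)) powr (1 / q) *
         (eps1 \<alpha> lam p powr (1 / p) * C_f f' a b \<alpha> q powr (1 / q)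
          + eps1 (1 - \<alpha>) lam p powr (1 / p) * D_f f' a b \<alpha> q powr (1 / q))"
      using gen[OF K1a K2a eps1nn eps1nn] h by (simp add: B_def)
  next
    assume h: "\<alpha> * lam \<le> 1 - lam * (1 - \<alpha>) \<and> 1 - lam * (1 - \<alpha>) \<le> 1 - \<alpha>"
    then have h1: "\<alpha> * lam \<le> 1 - \<alpha>" by linarith
    have "0 \<le> (1-\<alpha>)*lam - 1 + (1-\<alpha>)" using h by (simp add: algebra_simps)
    moreover have "(1-\<alpha>)*lam - 1 + (1-\<alpha>) \<le> (1-\<alpha>)*lam" using al by simp
    ultimately have E2: "0 \<le> eps2 (1-\<alpha>) lam p" by (rule eps2nn)
    show "\<bar>I_f f lam \<alpha> a b\<bar> \<le> (b - a) * (1 / (p + 1)) powr (1 / p) * (1 / (s + 1)) powr (1 / q) *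
         (eps1 \<alpha> lam p powr (1 / p) * C_f f' a b \<alpha> q powr (1 / q)
          + eps2 (1 - \<alpha>) lam p powr (1 / p) * D_f f' a b \<alpha> q powr (1 / q))"
      using gen[OF K1a[OF h1] K2b eps1nn E2] h by (simp add: B_def)
  next
    assume h: "1 - \<alpha> \<le> \<alpha> * lam \<and> \<alpha> * lam \<le> 1 - lam * (1 - \<alpha>)"
    then have h2: "1 - \<alpha> \<le> 1 - lam * (1 - \<alpha>)" by linarith
    have "0 \<le> \<alpha>*lam - 1 + \<alpha>" using h by simp
    moreover have "\<alpha>*lam - 1 + \<alpha> \<le> \<alpha>*lam" using al by simp
    ultimately have E1: "0 \<le> eps2 \<alpha> lam p" by (rule eps2nn)
    show "\<bar>I_f f lam \<alpha> a b\<bar> \<le> (b - a) * (1 / (p + 1)) powr (1 / p) * (1 / (s + 1)) powr (1 / q) *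
         (eps2 \<alpha> lam p powr (1 / p) * C_f f' a b \<alpha> q powr (1 / q)
          + eps1 (1 - \<alpha>) lam p powr (1 / p) * D_f f' a b \<alpha> q powr (1 / q))"
      using gen[OF K1b K2a[OF h2] E1 eps1nn] h by (simp add: B_def)
  qed
qed

end
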